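(* Let $X\in\mathbb{R}^{n\times p}$, $y\in\mathbb{R}^n$, $\lambda\ge0$, $\mu>0$, $A=X^\top X$, $\eta=\lambda_{\max}(\mu A^\top A)+1$, $K\ge1$ and a partition $I_1,\dots,I_K$ of $\{1,\dots,p\}$ into nonempty sets. Let $\{g^t=(\beta^t,z^t,u^t)\}_{t\ge0}$ be generated by Algorithm 1 or by Algorithm 2 (defined below) from an arbitrary initial point, and assume the set $\Omega^*$ of saddle points of the Lagrangian $L$ (defined below) is nonempty. Then: (1) (Global convergence) $g^t$ converges to some $g^*=(\beta^*,z^*,u^* )\in\Omega^*$; (2) (Rate) for every integer $T>0$, $$\|g^T-g^{T+1}\|_{H}^2\le \frac{1}{T+1}\|g^0-g^*\|_H^2,$$ where $H$ is the positive definite matrix defined below.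
   Context: Notation: $\mathcal{S}_\tau(v)=\mathrm{sign}(v)\odot\max\{|v|-\tau,0\}$ (componentwise soft thresholding); $\lambda_{\max}$ is the largest eigenvalue; $\|v\|_H=\sqrt{v^\top Hv}$. $X_i$ is the submatrix of $X$ with columns in $I_i$, $A_i=X^\top X_i$, $\beta_{i\cdot}$ is the subvector of $\beta$ indexed by $I_i$ (so $A\beta=\sum_iA_i\beta_{i\cdot}$). Let $\mathcal{Z}_0=\{z\in\mathbb{R}^p:\|z\|_\infty\le n\lambda\}$ and $\delta_{\mathcal{Z}_0}(z)=0$ if $z\in\mathcal{Z}_0$, $+\infty$ otherwise. The Lagrangian is $L(\beta,z;u)=\|\beta\|_1+\delta_{\mathcal{Z}_0}(z)-u^\top(A\beta-z-X^\top y)$ on $\mathbb{R}^p\times\mathbb{R}^p\times\mathbb{R}^p$; $\Omega^*$ is the set of $(\beta^*,z^*,u^* )$ with $L(\beta^*,z^*,u)\le L(\beta^*,z^*,u^* )\le L(\beta,z,u^* )$ for all $(\beta,z,u)$. Algorithm 1, for $t\ge0$: $\beta^{t+1}=\mathcal{S}_{1/\eta}(\beta^t+A^\top u^t/\eta)$; $z^{t+1}=\min\{\max\{z^t-u^t/\mu,-n\lambda\},n\lambda\}$; $u^{t+1}=u^t-\frac{\mu}{2}[2(A\beta^{t+1}-z^{t+1}-X^\top y)-(A\beta^t-z^t-X^\top y)]$. Algorithm 2, for $t\ge0$: $\beta^{t+1}_{i\cdot}=\mathcal{S}_{1/\eta}(\beta^t_{i\cdot}+A_i^\top u^t/\eta)$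 for $i=1,\dots,K$; $z^{t+1}$ as in Algorithm 1; $u^{t+1}=u^t-\frac{\mu}{2}[2(\sum_iA_i\beta^{t+1}_{i\cdot}-z^{t+1}-X^\top y)-(\sum_iA_i\beta^{t}_{i\cdot}-z^t-X^\top y)]$. The matrix $H\in\mathbb{R}^{3p\times3p}$ (acting on $g=(\beta,z,u)$) is $$H=\begin{pmatrix}\mu A^\top A+S & 0 & A^\top\\ 0 & \mu I_p & -I_p\\ A & -I_p & \frac{2}{\mu}I_p\end{pmatrix},\qquad S=\eta I_p-\mu A^\top A.$$ *)

theory Defs
  imports "HOL-Analysis.Analysis" "HOL-Library.Extended_Real"
begin

definition soft_thr :: "real \<Rightarrow> real^'p \<Rightarrow> real^'p" where
  "soft_thr \<tau> v = (\<chi> j. sgn (v $ j) * max (\<bar>v $ j\<bar> - \<tau>) 0)"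

definition lambda_max :: "real^'p^'p \<Rightarrow> real" where
  "lambda_max M = Max {c. \<exists>v. v \<noteq> 0 \<and> M *v v = c *\<^sub>R v}"

definition clip :: "real \<Rightarrow> real^'p \<Rightarrow> real^'p" where
  "clip c v = (\<chi> j. min (max (v $ j) (- c)) c)"

definition Z0 :: "real \<Rightarrow> (real^'p) set" where
  "Z0 c = {z. \<forall>j. \<bar>z $ j\<bar> \<le> c}"

definition lagr :: "real^'p^'n \<Rightarrow> real^'n \<Rightarrow> real \<Rightarrow> real^'p \<Rightarrow> real^'p \<Rightarrow> real^'p \<Rightarrow> ereal" where
  "lagr X y lam \<beta> z u =
     (if z \<in> Z0 (real CARD('n) * lam)
      then ereal ((\<Sum>j\<in>UNIV. \<bar>\<beta> $ j\<bar>)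
                  - u \<bullet> ((transpose X ** X) *v \<beta> - z - transpose X *v y))
      else \<infinity>)"

definition saddle_set :: "real^'p^'n \<Rightarrow> real^'n \<Rightarrow> real \<Rightarrow> ((real^'p) \<times> (real^'p) \<times> (real^'p)) set" where
  "saddle_set X y lam = {(\<beta>s, zs, us).
     \<forall>\<beta> z u. lagr X y lam \<beta>s zs u \<le> lagr X y lam \<beta>s zs us
            \<and> lagr X y lam \<beta>s zs us \<le> lagr X y lam \<beta> z us}"

definition eta_of :: "real^'p^'n \<Rightarrow> real \<Rightarrow> real" where
  "eta_of X \<mu> = lambda_max (\<mu> *\<^sub>R (transpose (transpose X ** X) ** (transpose X ** X))) + 1"

text \<open>Restriction of a vector to the index block I (zero elsewhere); used to
  express subvectors beta_{i.} and the products A_i beta_{i.}, A_i^T u.\<close>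
definition blk :: "'p set \<Rightarrow> real^'p \<Rightarrow> real^'p" where
  "blk I v = (\<chi> j. if j \<in> I then v $ j else 0)"

definition alg1_step ::
  "real^'p^'n \<Rightarrow> real^'n \<Rightarrow> real \<Rightarrow> real \<Rightarrow>
   ((real^'p) \<times> (real^'p) \<times> (real^'p)) \<Rightarrow> ((real^'p) \<times> (real^'p) \<times> (real^'p)) \<Rightarrow> bool" where
  "alg1_step X y lam \<mu> g g' =
     (let A = transpose X ** X; \<eta> = eta_of X \<mu>; c = real CARD('n) * lam;
          (\<beta>, z, u) = g; (\<beta>', z', u') = g' in
      \<beta>' = soft_thr (1 / \<eta>) (\<beta> + (1 / \<eta>) *\<^sub>R (transpose A *v u)) \<and>
      z' = clip c (z - (1 / \<mu>) *\<^sub>R u) \<and>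
      u' = u - (\<mu> / 2) *\<^sub>R (2 *\<^sub>R (A *v \<beta>' - z' - transpose X *v y)
                               - (A *v \<beta> - z - transpose X *v y)))"

text \<open>One step of Algorithm 2 (block version, blocks I 1, ..., I K).
  A_i beta_{i.} is A *v blk (I i) beta; (A_i^T u) as a subvector indexed by I i
  is blk (I i) (A^T u).\<close>
definition alg2_step ::
  "real^'p^'n \<Rightarrow> real^'n \<Rightarrow> real \<Rightarrow> real \<Rightarrow> nat \<Rightarrow> (nat \<Rightarrow> 'p set) \<Rightarrow>
   ((real^'p) \<times> (real^'p) \<times> (real^'p)) \<Rightarrow> ((real^'p) \<times> (real^'p) \<times> (real^'p)) \<Rightarrow> bool" where
  "alg2_step X y lam \<mu> K I g g' =
     (let A = transpose X ** X; \<eta> = eta_of X \<mu>; c = real CARD('n) * lam;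
          (\<beta>, z, u) = g; (\<beta>', z', u') = g' in
      (\<forall>i\<in>{1..K}. blk (I i) \<beta>' =
          blk (I i) (soft_thr (1 / \<eta>) (blk (I i) \<beta> + (1 / \<eta>) *\<^sub>R blk (I i) (transpose A *v u)))) \<and>
      z' = clip c (z - (1 / \<mu>) *\<^sub>R u) \<and>
      u' = u - (\<mu> / 2) *\<^sub>R
             (2 *\<^sub>R ((\<Sum>i\<in>{1..K}. A *v blk (I i) \<beta>') - z' - transpose X *v y)
              - ((\<Sum>i\<in>{1..K}. A *v blk (I i) \<beta>) - z - transpose X *v y)))"

text \<open>Squared H-norm g^T H g of g = (beta, z, u), with the block matrix
  H = [[mu A^T A + S, 0, A^T], [0, mu I, -I], [A, -I, (2/mu) I]], S = eta I - mu A^T A.\<close>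
definition Hnorm2 :: "real^'p^'n \<Rightarrow> real \<Rightarrow> ((real^'p) \<times> (real^'p) \<times> (real^'p)) \<Rightarrow> real" where
  "Hnorm2 X \<mu> g =
     (let A = transpose X ** X; \<eta> = eta_of X \<mu>;
          S = \<eta> *\<^sub>R mat 1 - \<mu> *\<^sub>R (transpose A ** A);
          H11 = \<mu> *\<^sub>R (transpose A ** A) + S;
          (\<beta>, z, u) = g in
      \<beta> \<bullet> (H11 *v \<beta>) + \<beta> \<bullet> (transpose A *v u)
      + \<mu> * (z \<bullet> z) - z \<bullet> u
      + u \<bullet> (A *v \<beta>) - u \<bullet> z + (2 / \<mu>) * (u \<bullet> u))"

end

theory Submission
  imports Defs
begin


lemma adj: "(transpose A *v u) \<bullet> (b::real^'p) = u \<bullet> (A *v b)"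
  for A :: "real^'p^'m"
  by (simp add: dot_lmul_matrix)

lemma eig_finite:
  fixes M :: "real^'p^'p"
  assumes sym: "\<And>x y. x \<bullet> (M *v y) = (M *v x) \<bullet> y"
  shows "finite {c. \<exists>v. v \<noteq> 0 \<and> M *v v = c *\<^sub>R v}"
proof -
  define E where "E = {c. \<exists>v. v \<noteq> 0 \<and> M *v v = c *\<^sub>R v}"
  define e where "e c = (SOME v. v \<noteq> 0 \<and> M *v v = c *\<^sub>R v)" for c
  have e: "e c \<noteq> 0 \<and> M *v e c = c *\<^sub>R e c" if "c \<in> E" for c
  proof -
    have "\<exists>v. v \<noteq> 0 \<and> M *v v = c *\<^sub>R v" using that unfolding E_def by simp
    then show ?thesis unfolding e_def by (rule someI_ex)
  qed
  have inj: "inj_on e E"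
  proof (rule inj_onI)
    fix a b assume ab: "a \<in> E" "b \<in> E" "e a = e b"
    have "a *\<^sub>R e a = b *\<^sub>R e a" using e[OF ab(1)] e[OF ab(2)] ab(3) by metis
    then show "a = b" using e[OF ab(1)] by simp
  qed
  have orth: "pairwise orthogonal (e ` E)"
  proof (rule pairwiseI)
    fix x y assume x: "x \<in> e ` E" and y: "y \<in> e ` E" and xy: "x \<noteq> y"
    from x obtain a where a: "a \<in> E" "x = e a" by blast
    from y obtain b where b: "b \<in> E" "y = e b" by blast
    have "a \<noteq> b" using xy a b by blast
    have "a * (x \<bullet> y) = (M *v x) \<bullet> y" using e[OF a(1)] a(2) by simp
    also have "\<dots> = x \<bullet> (M *v y)" by (rule sym[symmetric])
    also have "\<dots> = b * (x \<bullet> y)" using e[OF b(1)] b(2) by simp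
    finally have "(a - b) * (x \<bullet> y) = 0" by (simp add: algebra_simps)
    with \<open>a \<noteq> b\<close> show "orthogonal x y" by (simp add: orthogonal_def)
  qed
  have "0 \<notin> e ` E" using e by auto
  then have "independent (e ` E)" using orth pairwise_orthogonal_independent by blast
  then have "finite (e ` E)" using independent_bound by blast
  then have "finite E" using inj finite_imageD by blast
  then show ?thesis unfolding E_def .
qed

lemma rayleigh:
  fixes A :: "real^'p^'p" and \<mu> :: real
  assumes mu: "\<mu> \<ge> 0"
  shows "lambda_max (\<mu> *\<^sub>R (transpose A ** A)) \<ge> 0"
    and "\<mu> * ((A *v x) \<bullet> (A *v x)) \<le> lambda_max (\<mu> *\<^sub>R (transpose A ** A)) * (x \<bullet> x)"
proof -
  define M where "M = \<mu> *\<^sub>R (transpose A ** A)"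
  have Mv: "M *v v = \<mu> *\<^sub>R (transpose A *v (A *v v))" for v
    unfolding M_def by (simp add: scaleR_matrix_vector_assoc matrix_vector_mul_assoc)
  define q where "q v = \<mu> * ((A *v v) \<bullet> (A *v v))" for v
  have xM: "x \<bullet> (M *v y) = \<mu> * ((A *v x) \<bullet> (A *v y))" for x y
    unfolding Mv by (simp only: inner_scaleR_right) (metis adj inner_commute)
  have sym: "x \<bullet> (M *v y) = (M *v x) \<bullet> y" for x y
    using xM[of x y] xM[of y x] by (simp add: inner_commute)
  have cont: "continuous_on (sphere 0 1) q"
    unfolding q_def by (intro continuous_intros)
  have ne: "sphere (0::real^'p) 1 \<noteq> {}"
  proof -
    obtain i :: 'p where True by blast
    have "norm (axis i (1::real)) = 1" by simp
    then show ?thesis by (metis mem_sphere_0 empty_iff)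
  qed
  obtain v0 where v0: "v0 \<in> sphere 0 1" and mx: "\<And>y. y \<in> sphere 0 1 \<Longrightarrow> q y \<le> q v0"
    using continuous_attains_sup[OF compact_sphere ne cont] by blast
  define c where "c = q v0"
  have v0n: "v0 \<bullet> v0 = 1" using v0 by (simp add: dot_square_norm)
  have qhom: "q (s *\<^sub>R v) = s^2 * q v" for s v
    unfolding q_def by (simp add: matrix_vector_mult_scaleR power2_eq_square algebra_simps)
  have qle: "q x \<le> c * (x \<bullet> x)" for x
  proof (cases "x = 0")
    case True then show ?thesis by (simp add: q_def)
  next
    case False
    then have "norm x > 0" by simp
    have "(1 / norm x) *\<^sub>R x \<in> sphere 0 1" using False by simp
    then have "q ((1 / norm x) *\<^sub>R x) \<le> c" using mx c_def by blast
    then have "(1/norm x)^2 * q x \<le> c" by (simp add: qhom)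
    then have "q x \<le> c * (norm x)^2" using \<open>norm x > 0\<close>
      by (simp add: field_simps power2_eq_square)
    then show ?thesis by (simp add: dot_square_norm)
  qed
  define r where "r = M *v v0 - c *\<^sub>R v0"
  have r0: "r = 0"
  proof (rule ccontr)
    assume "r \<noteq> 0"
    then have rr: "r \<bullet> r > 0" by simp
    define K where "K = q r - c * (r \<bullet> r)"
    have gen: "2 * t * (r \<bullet> r) + t^2 * K \<le> 0" for t
    proof -
      have f1: "q (v0 + t *\<^sub>R r) \<le> c * ((v0 + t *\<^sub>R r) \<bullet> (v0 + t *\<^sub>R r))" by (rule qle)
      have f2: "q (v0 + t *\<^sub>R r) = q v0 + 2 * t * (r \<bullet> (M *v v0)) + t^2 * q r"
        unfolding q_def xM
        by (simp add: algebra_simps inner_add_left inner_add_right power2_eq_square inner_commute)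
      have f3: "r \<bullet> (M *v v0) = r \<bullet> r + c * (r \<bullet> v0)"
        unfolding r_def by (simp add: inner_diff_right inner_diff_left algebra_simps)
      have f4: "(v0 + t *\<^sub>R r) \<bullet> (v0 + t *\<^sub>R r) = 1 + 2 * t * (r \<bullet> v0) + t^2 * (r \<bullet> r)"
        using v0n by (simp add: inner_add_left inner_add_right power2_eq_square inner_commute algebra_simps)
      have f5: "2 * t * (r \<bullet> r) + t^2 * K = (q v0 + 2 * t * (r \<bullet> r + c * (r \<bullet> v0)) + t^2 * q r)
            - c * (1 + 2 * t * (r \<bullet> v0) + t^2 * (r \<bullet> r))"
        unfolding K_def c_def by (simp add: algebra_simps)
      show ?thesis using f1 f2 f3 f4 f5 by simp
    qed
    define t where "t = (r \<bullet> r) / (\<bar>K\<bar> + 1)"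
    have tp: "t > 0" unfolding t_def using rr by simp
    have "2 * t * (r \<bullet> r) + t^2 * K \<le> 0" by (rule gen)
    then have "t * (2 * (r \<bullet> r) + t * K) \<le> 0"
      by (simp add: power2_eq_square algebra_simps)
    then have "2 * (r \<bullet> r) + t * K \<le> 0" using tp
      by (simp add: mult_le_0_iff)
    moreover have "t * \<bar>K\<bar> < r \<bullet> r" unfolding t_def using rr
      by (simp add: field_simps)
    moreover have "- (t * K) \<le> t * \<bar>K\<bar>" 
    proof -
      have "t * (- K) \<le> t * \<bar>K\<bar>" using tp by (intro mult_left_mono) auto
      then show ?thesis by simp
    qed
    ultimately show False using rr by linarith
  qed
  have v0ne: "v0 \<noteq> 0" using v0 by auto
  have eig: "c \<in> {c. \<exists>v. v \<noteq> 0 \<and> M *v v = c *\<^sub>R v}"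
    using r0 v0ne unfolding r_def by auto
  have cle: "c \<le> lambda_max M"
    unfolding lambda_max_def using eig_finite[OF sym] eig by (rule Max_ge)
  have c0: "c \<ge> 0" unfolding c_def q_def using mu by simp
  show "lambda_max M \<ge> 0" using cle c0 by linarith
  show "\<mu> * ((A *v x) \<bullet> (A *v x)) \<le> lambda_max M * (x \<bullet> x)"
    using qle[of x] cle unfolding q_def
    by (smt (verit) inner_ge_zero mult_right_mono)
qed



definition l1 :: "real^'p \<Rightarrow> real" where "l1 v = (\<Sum>j\<in>UNIV. \<bar>v $ j\<bar>)"

lemma soft_scalar:
  fixes \<tau> a v :: real
  assumes "\<tau> > 0"
  shows "(a - sgn v * max (\<bar>v\<bar> - \<tau>) 0) * (v - sgn v * max (\<bar>v\<bar> - \<tau>) 0)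
         \<le> \<tau> * (\<bar>a\<bar> - \<bar>sgn v * max (\<bar>v\<bar> - \<tau>) 0\<bar>)"
proof (cases "\<bar>v\<bar> \<le> \<tau>")
  case True
  have "a * v \<le> \<bar>a * v\<bar>" by (rule abs_ge_self)
  moreover have "\<bar>a * v\<bar> = \<bar>a\<bar> * \<bar>v\<bar>" by (rule abs_mult)
  moreover have "\<bar>a\<bar> * \<bar>v\<bar> \<le> \<bar>a\<bar> * \<tau>" using True by (intro mult_left_mono) auto
  ultimately have "a * v \<le> \<tau> * \<bar>a\<bar>" by (simp add: mult.commute)
  moreover have m0: "max (\<bar>v\<bar> - \<tau>) 0 = 0" using True by simp
  ultimately show ?thesis by (simp only: m0 mult_zero_right diff_zero abs_zero)
next
  case False
  show ?thesis
  proof (cases "v > 0")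
    case True
    then have "max (\<bar>v\<bar> - \<tau>) 0 = v - \<tau>" "sgn v = 1" using False by auto
    moreover have "\<tau> * a \<le> \<tau> * \<bar>a\<bar>" using assms by (intro mult_left_mono) auto
    ultimately show ?thesis using False True assms by (simp add: algebra_simps)
  next
    case f2: False
    then have "max (\<bar>v\<bar> - \<tau>) 0 = - v - \<tau>" "sgn v = -1" using False f2 assms by (auto simp: sgn_if)
    moreover have "\<tau> * (-a) \<le> \<tau> * \<bar>a\<bar>" using assms by (intro mult_left_mono) auto
    ultimately show ?thesis using False f2 assms by (simp add: algebra_simps)
  qed
qed

lemma soft_opt:
  assumes "\<tau> > 0"
  shows "(w - soft_thr \<tau> v) \<bullet> (v - soft_thr \<tau> v) \<le> \<tau> * (l1 w - l1 (soft_thr \<tau> v))"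
proof -
  have "(w - soft_thr \<tau> v) \<bullet> (v - soft_thr \<tau> v)
      = (\<Sum>j\<in>UNIV. (w$j - sgn (v$j) * max (\<bar>v$j\<bar> - \<tau>) 0) * (v$j - sgn (v$j) * max (\<bar>v$j\<bar> - \<tau>) 0))"
    by (simp add: inner_vec_def soft_thr_def)
  also have "\<dots> \<le> (\<Sum>j\<in>UNIV. \<tau> * (\<bar>w$j\<bar> - \<bar>sgn (v$j) * max (\<bar>v$j\<bar> - \<tau>) 0\<bar>))"
    by (intro sum_mono soft_scalar assms)
  also have "\<dots> = \<tau> * (l1 w - l1 (soft_thr \<tau> v))"
    by (simp add: l1_def soft_thr_def sum_distrib_left sum_subtractf right_diff_distrib)
  finally show ?thesis .
qed

lemma clip_opt:
  assumes "zh \<in> Z0 c"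
  shows "(zh - clip c v) \<bullet> (v - clip c v) \<le> 0"
proof -
  have "(zh - clip c v) \<bullet> (v - clip c v)
      = (\<Sum>j\<in>UNIV. (zh$j - min (max (v$j) (-c)) c) * (v$j - min (max (v$j) (-c)) c))"
    by (simp add: inner_vec_def clip_def)
  also have "\<dots> \<le> 0"
  proof (rule sum_nonpos)
    fix j
    have zc: "\<bar>zh $ j\<bar> \<le> c" using assms by (simp add: Z0_def)
    show "(zh$j - min (max (v$j) (-c)) c) * (v$j - min (max (v$j) (-c)) c) \<le> 0"
    proof (cases "v$j \<le> -c")
      case True
      then have "min (max (v$j) (-c)) c = -c" using zc by simp
      then show ?thesis using True zc by (simp add: mult_nonneg_nonpos)
    next
      case F: False
      show ?thesis
      proof (cases "v$j \<ge> c")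
        case True
        then have "min (max (v$j) (-c)) c = c" using zc by simp
        then show ?thesis using True zc by (simp add: mult_nonpos_nonneg)
      next
        case False
        then have "min (max (v$j) (-c)) c = v$j" using F by simp
        then show ?thesis by simp
      qed
    qed
  qed
  finally show ?thesis by simp
qed

lemma clip_Z0: "c \<ge> 0 \<Longrightarrow> clip c v \<in> Z0 c"
  by (auto simp: clip_def Z0_def)

lemma closed_Z0: "closed (Z0 c :: (real^'p) set)"
  unfolding Z0_def by (intro closed_Collect_all closed_Collect_le continuous_intros)

lemma zero_Z0: "c \<ge> 0 \<Longrightarrow> 0 \<in> Z0 c"
  by (simp add: Z0_def)



type_synonym 'p trip = "(real^'p) \<times> (real^'p) \<times> (real^'p)"

definition hb :: "real^'p^'p \<Rightarrow> real \<Rightarrow> real \<Rightarrow> 'p trip \<Rightarrow> 'p trip \<Rightarrow> real" where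
  "hb A \<eta> \<mu> g h = \<eta> * (fst g \<bullet> fst h) + snd (snd h) \<bullet> (A *v fst g) + snd (snd g) \<bullet> (A *v fst h)
     + \<mu> * (fst (snd g) \<bullet> fst (snd h)) - fst (snd g) \<bullet> snd (snd h) - snd (snd g) \<bullet> fst (snd h)
     + (2 / \<mu>) * (snd (snd g) \<bullet> snd (snd h))"

definition phi :: "real^'p^'p \<Rightarrow> real^'p \<Rightarrow> 'p trip \<Rightarrow> 'p trip \<Rightarrow> real" where
  "phi A b w w' = l1 (fst w) - l1 (fst w') - snd (snd w') \<bullet> (A *v (fst w - fst w'))
     + (fst (snd w) - fst (snd w')) \<bullet> snd (snd w')
     + (snd (snd w) - snd (snd w')) \<bullet> (A *v fst w' - fst (snd w') - b)"

definition step :: "real^'p^'p \<Rightarrow> real^'p \<Rightarrow> real \<Rightarrow> real \<Rightarrow> real \<Rightarrow> 'p trip \<Rightarrow> 'p trip \<Rightarrow> bool" where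
  "step A b \<eta> \<mu> c g g' \<longleftrightarrow>
     fst g' = soft_thr (1 / \<eta>) (fst g + (1 / \<eta>) *\<^sub>R (transpose A *v snd (snd g))) \<and>
     fst (snd g') = clip c (fst (snd g) - (1 / \<mu>) *\<^sub>R snd (snd g)) \<and>
     snd (snd g') = snd (snd g) - (\<mu> / 2) *\<^sub>R (2 *\<^sub>R (A *v fst g' - fst (snd g') - b)
                                     - (A *v fst g - fst (snd g) - b))"

lemma hb_sym: "hb A \<eta> \<mu> g h = hb A \<eta> \<mu> h g"
  unfolding hb_def by (simp add: inner_commute algebra_simps)

lemma hb_diff_left: "hb A \<eta> \<mu> (x - y) h = hb A \<eta> \<mu> x h - hb A \<eta> \<mu> y h"
  unfolding hb_def by (simp add: inner_diff_left inner_diff_right algebra_simps)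

lemma hb_diff_right: "hb A \<eta> \<mu> h (x - y) = hb A \<eta> \<mu> h x - hb A \<eta> \<mu> h y"
  unfolding hb_def by (simp add: inner_diff_left inner_diff_right algebra_simps)

lemma hb_zero_left [simp]: "hb A \<eta> \<mu> 0 h = 0"
  unfolding hb_def by simp

lemma hb_zero_right [simp]: "hb A \<eta> \<mu> h 0 = 0"
  unfolding hb_def by simp

lemma hb_scale: "hb A \<eta> \<mu> (s *\<^sub>R g) (s *\<^sub>R g) = s^2 * hb A \<eta> \<mu> g g"
  unfolding hb_def by (simp add: matrix_vector_mult_scaleR algebra_simps power2_eq_square)

lemma hb_swap: "hb A \<eta> \<mu> (x - y) (x - y) = hb A \<eta> \<mu> (y - x) (y - x)"
  by (simp add: hb_diff_left hb_diff_right hb_sym)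

lemma hb_expand: "hb A \<eta> \<mu> (a - d) (a - d) = hb A \<eta> \<mu> a a - 2 * hb A \<eta> \<mu> a d + hb A \<eta> \<mu> d d"
  by (simp add: hb_diff_left hb_diff_right hb_sym[of A \<eta> \<mu> d a])

lemma hb_lower:
  assumes mu: "\<mu> > 0" and pos: "\<And>x. \<mu> * ((A *v x) \<bullet> (A *v x)) \<le> (\<eta> - 1) * (x \<bullet> x)"
  shows "hb A \<eta> \<mu> g g \<ge> fst g \<bullet> fst g
           + (1/\<mu>) * ((\<mu> *\<^sub>R (A *v fst g) + snd (snd g)) \<bullet> (\<mu> *\<^sub>R (A *v fst g) + snd (snd g)))
           + (1/\<mu>) * ((\<mu> *\<^sub>R fst (snd g) - snd (snd g)) \<bullet> (\<mu> *\<^sub>R fst (snd g) - snd (snd g)))"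
proof -
  obtain \<beta> z u where g: "g = (\<beta>, z, u)" by (cases g) auto
  have e1: "(1/\<mu>) * ((\<mu> *\<^sub>R (A *v \<beta>) + u) \<bullet> (\<mu> *\<^sub>R (A *v \<beta>) + u))
        = \<mu> * ((A *v \<beta>) \<bullet> (A *v \<beta>)) + 2 * (u \<bullet> (A *v \<beta>)) + (1/\<mu>) * (u \<bullet> u)"
    using mu by (simp add: inner_add_left inner_add_right inner_commute field_simps power2_eq_square)
  have e2: "(1/\<mu>) * ((\<mu> *\<^sub>R z - u) \<bullet> (\<mu> *\<^sub>R z - u))
        = \<mu> * (z \<bullet> z) - 2 * (z \<bullet> u) + (1/\<mu>) * (u \<bullet> u)"
    using mu by (simp add: inner_diff_left inner_diff_right inner_commute field_simps power2_eq_square)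
  have h: "hb A \<eta> \<mu> g g = \<eta> * (\<beta> \<bullet> \<beta>) + 2 * (u \<bullet> (A *v \<beta>)) + \<mu> * (z \<bullet> z) - 2 * (z \<bullet> u) + (2/\<mu>) * (u \<bullet> u)"
    unfolding g hb_def by (simp add: inner_commute)
  have "\<mu> * ((A *v \<beta>) \<bullet> (A *v \<beta>)) \<le> (\<eta> - 1) * (\<beta> \<bullet> \<beta>)" by (rule pos)
  then show ?thesis unfolding g using e1 e2 h by (simp add: g algebra_simps)
qed



lemma hb_pos:
  assumes mu: "\<mu> > 0" and pos: "\<And>x. \<mu> * ((A *v x) \<bullet> (A *v x)) \<le> (\<eta> - 1) * (x \<bullet> x)"
    and ne: "g \<noteq> 0"
  shows "hb A \<eta> \<mu> g g > 0"
proof (rule ccontr)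
  assume "\<not> ?thesis"
  then have le: "hb A \<eta> \<mu> g g \<le> 0" by simp
  obtain \<beta> z u where g: "g = (\<beta>, z, u)" by (cases g) auto
  define P where "P = (\<mu> *\<^sub>R (A *v \<beta>) + u) \<bullet> (\<mu> *\<^sub>R (A *v \<beta>) + u)"
  define Q where "Q = (\<mu> *\<^sub>R z - u) \<bullet> (\<mu> *\<^sub>R z - u)"
  have "hb A \<eta> \<mu> g g \<ge> \<beta> \<bullet> \<beta> + (1/\<mu>) * P + (1/\<mu>) * Q"
    using hb_lower[OF mu pos, of g] unfolding g P_def Q_def by simp
  moreover have "P \<ge> 0" "Q \<ge> 0" "\<beta> \<bullet> \<beta> \<ge> 0" unfolding P_def Q_def by simp_all
  moreover have "(1/\<mu>) * P \<ge> 0" "(1/\<mu>) * Q \<ge> 0" using mu \<open>P \<ge> 0\<close> \<open>Q \<ge> 0\<close> by simp_all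
  ultimately have "\<beta> \<bullet> \<beta> = 0" "(1/\<mu>) * P = 0" "(1/\<mu>) * Q = 0" using le by linarith+
  then have b0: "\<beta> = 0" and "P = 0" "Q = 0" using mu by auto
  then have u0: "u = 0" unfolding P_def by simp
  then have "z = 0" using \<open>Q = 0\<close> mu unfolding Q_def by simp
  then show False using ne g b0 u0 by (simp add: zero_prod_def)
qed

lemma cont_mv [continuous_intros]: "continuous_on S f \<Longrightarrow> continuous_on S (\<lambda>x. (A::real^'p^'m) *v f x)"
  using bounded_linear.continuous_on[OF matrix_vector_mul_bounded_linear] by blast

lemma tendsto_mv [tendsto_intros]: "(f \<longlongrightarrow> l) F \<Longrightarrow> ((\<lambda>x. (A::real^'p^'m) *v f x) \<longlongrightarrow> A *v l) F"
  using bounded_linear.tendsto[OF matrix_vector_mul_bounded_linear] by blast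

lemma adj2: "x \<bullet> (u v* A) = u \<bullet> ((A::real^'p^'m) *v x)"
  by (metis dot_lmul_matrix inner_commute)

lemma hb_cont: "continuous_on S (\<lambda>g. hb A \<eta> \<mu> g g)"
  unfolding hb_def by (intro continuous_intros)

lemma hb_coercive:
  assumes mu: "\<mu> > 0" and pos: "\<And>x. \<mu> * ((A *v x) \<bullet> (A *v x)) \<le> (\<eta> - 1) * (x \<bullet> x)"
  shows "\<exists>m>0. \<forall>g::('p::finite) trip. m * (norm g)^2 \<le> hb A \<eta> \<mu> g g"
proof -
  have ne: "sphere (0::('p::finite) trip) 1 \<noteq> {}"
  proof -
    obtain e :: "('p::finite) trip" where "e \<in> Basis" using nonempty_Basis by blast
    then have "norm e = 1" by simp
    then show ?thesis by (metis mem_sphere_0 empty_iff)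
  qed
  obtain v0 where v0: "v0 \<in> sphere 0 1" and mn: "\<And>y. y \<in> sphere 0 1 \<Longrightarrow> hb A \<eta> \<mu> v0 v0 \<le> hb A \<eta> \<mu> y y"
    using continuous_attains_inf[OF compact_sphere ne hb_cont] by blast
  define m where "m = hb A \<eta> \<mu> v0 v0"
  have "v0 \<noteq> 0" using v0 by auto
  then have mpos: "m > 0" unfolding m_def by (rule hb_pos[OF mu pos])
  have "m * (norm g)^2 \<le> hb A \<eta> \<mu> g g" for g :: "('p::finite) trip"
  proof (cases "g = 0")
    case True then show ?thesis by simp
  next
    case False
    then have np: "norm g > 0" by simp
    have "(1 / norm g) *\<^sub>R g \<in> sphere 0 1" using False by simp
    then have "m \<le> hb A \<eta> \<mu> ((1 / norm g) *\<^sub>R g) ((1 / norm g) *\<^sub>R g)" using mn m_def by blast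
    also have "\<dots> = (1 / norm g)^2 * hb A \<eta> \<mu> g g" by (rule hb_scale)
    finally have "m \<le> (1 / norm g)^2 * hb A \<eta> \<mu> g g" .
    then show ?thesis using np by (simp add: field_simps power2_eq_square)
  qed
  then show ?thesis using mpos by blast
qed

lemma vec_times2: "(x::real^'p) * 2 = 2 *\<^sub>R x"
  by (simp add: vec_eq_iff)

lemma ident:
  fixes A :: "real^'p^'p"
  shows "phi A b (bh, zh, uh) (b', z', u') - hb A \<eta> \<mu> ((b', z', u') - (bh, zh, uh)) ((b', z', u') - (b0, z0, u0))
   = (l1 bh - l1 b' - (bh - b') \<bullet> (transpose A *v u0 + \<eta> *\<^sub>R (b0 - b')))
     + (zh - z') \<bullet> (u0 + \<mu> *\<^sub>R (z' - z0))
     + (uh - u') \<bullet> ((A *v b' - z' - b) + (2 / \<mu>) *\<^sub>R (u' - u0) + A *v (b' - b0) - (z' - z0))"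
  unfolding phi_def hb_def
  apply (simp add: inner_diff_left inner_diff_right inner_add_left inner_add_right adj2
        matrix_vector_mult_diff_distrib matrix_vector_right_distrib matrix_vector_mult_scaleR)
  apply (simp add: algebra_simps inner_commute vec_times2 diff_divide_distrib add_divide_distrib)
  done



lemma vi:
  fixes A :: "real^'p^'p"
  assumes eta: "\<eta> > 0" and mu: "\<mu> > 0" and st: "step A b \<eta> \<mu> c g g'"
    and zh: "fst (snd wh) \<in> Z0 c"
  shows "hb A \<eta> \<mu> (g' - wh) (g' - g) \<le> phi A b wh g'"
proof -
  obtain b0 z0 u0 where g: "g = (b0, z0, u0)" by (cases g) auto
  obtain b' z' u' where g': "g' = (b', z', u')" by (cases g') auto
  obtain bh zh uh where wh: "wh = (bh, zh, uh)" by (cases wh) auto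
  have sb: "b' = soft_thr (1/\<eta>) (b0 + (1/\<eta>) *\<^sub>R (transpose A *v u0))"
    and sz: "z' = clip c (z0 - (1/\<mu>) *\<^sub>R u0)"
    and su: "u' = u0 - (\<mu>/2) *\<^sub>R (2 *\<^sub>R (A *v b' - z' - b) - (A *v b0 - z0 - b))"
    using st unfolding step_def g g' by auto
  have zhZ: "zh \<in> Z0 c" using zh wh by simp
  define v where "v = b0 + (1/\<eta>) *\<^sub>R (transpose A *v u0)"
  have "(bh - b') \<bullet> (v - b') \<le> (1/\<eta>) * (l1 bh - l1 b')"
    unfolding sb v_def[symmetric] by (rule soft_opt) (use eta in simp)
  then have "\<eta> * ((bh - b') \<bullet> (v - b')) \<le> l1 bh - l1 b'"
    using eta by (simp add: field_simps)
  moreover have "transpose A *v u0 + \<eta> *\<^sub>R (b0 - b') = \<eta> *\<^sub>R (v - b')"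
    unfolding v_def using eta by (simp add: algebra_simps)
  ultimately have T1: "l1 bh - l1 b' - (bh - b') \<bullet> (transpose A *v u0 + \<eta> *\<^sub>R (b0 - b')) \<ge> 0"
    by simp
  define w where "w = z0 - (1/\<mu>) *\<^sub>R u0"
  have "(zh - z') \<bullet> (w - z') \<le> 0" unfolding sz w_def[symmetric] by (rule clip_opt[OF zhZ])
  moreover have "u0 + \<mu> *\<^sub>R (z' - z0) = - \<mu> *\<^sub>R (w - z')"
    unfolding w_def using mu by (simp add: algebra_simps)
  ultimately have T2: "(zh - z') \<bullet> (u0 + \<mu> *\<^sub>R (z' - z0)) \<ge> 0"
    using mu by (simp add: mult_le_0_iff)
  have "(2 / \<mu>) *\<^sub>R (u' - u0) = - (2 *\<^sub>R (A *v b' - z' - b) - (A *v b0 - z0 - b))"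
    unfolding su using mu by simp
  then have E0: "(A *v b' - z' - b) + (2 / \<mu>) *\<^sub>R (u' - u0) + A *v (b' - b0) - (z' - z0) = 0"
    by (simp only:) (simp add: vec_eq_iff algebra_simps)
  have "phi A b wh g' - hb A \<eta> \<mu> (g' - wh) (g' - g)
     = (l1 bh - l1 b' - (bh - b') \<bullet> (transpose A *v u0 + \<eta> *\<^sub>R (b0 - b')))
     + (zh - z') \<bullet> (u0 + \<mu> *\<^sub>R (z' - z0))
     + (uh - u') \<bullet> ((A *v b' - z' - b) + (2 / \<mu>) *\<^sub>R (u' - u0) + A *v (b' - b0) - (z' - z0))"
    unfolding g g' wh by (rule ident)
  also have "\<dots> \<ge> 0" using T1 T2 E0 by simp
  finally show ?thesis by simp
qed

lemma phi_skew: "phi A b x y + phi A b y x = 0"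
  unfolding phi_def
  by (simp add: inner_diff_left inner_diff_right matrix_vector_mult_diff_distrib algebra_simps inner_commute)



definition sad :: "real^'p^'p \<Rightarrow> real^'p \<Rightarrow> real \<Rightarrow> 'p trip \<Rightarrow> bool" where
  "sad A b c w \<longleftrightarrow> fst (snd w) \<in> Z0 c \<and> A *v fst w - fst (snd w) - b = 0 \<and>
     (\<forall>\<beta> z. z \<in> Z0 c \<longrightarrow> l1 (fst w) \<le> l1 \<beta> - snd (snd w) \<bullet> (A *v \<beta> - z - b))"

lemma sad_phi:
  assumes "sad A b c ws" and "fst (snd w') \<in> Z0 c"
  shows "phi A b ws w' \<le> 0"
proof -
  obtain bs zs us where ws: "ws = (bs, zs, us)" by (cases ws) auto
  obtain b' z' u' where w': "w' = (b', z', u')" by (cases w') auto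
  have r00: "A *v bs - zs - b = 0" using assms(1) ws by (simp add: sad_def)
  then have r0: "A *v bs = zs + b" by (metis diff_diff_eq eq_iff_diff_eq_0)
  have all: "\<forall>\<beta> z. z \<in> Z0 c \<longrightarrow> l1 bs \<le> l1 \<beta> - us \<bullet> (A *v \<beta> - z - b)"
    using assms(1) ws by (simp add: sad_def)
  have opt: "l1 bs \<le> l1 b' - us \<bullet> (A *v b' - z' - b)"
    using all assms(2) w' by simp
  have "phi A b ws w' = l1 bs - l1 b' + us \<bullet> (A *v b' - z' - b)"
    unfolding phi_def ws w' by (simp add: r0 matrix_vector_mult_diff_distrib inner_diff_left inner_diff_right
        inner_add_left inner_add_right algebra_simps inner_commute)
  then show ?thesis using opt by simp
qed

lemma mv_neg: "(A::real^'p^'m) *v (- x) = - (A *v x)"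
  by (metis matrix_vector_mult_diff_distrib diff_0 matrix_vector_mult_0_right)

lemma hb_minus_left: "hb A \<eta> \<mu> (- x) h = - hb A \<eta> \<mu> x h"
  unfolding hb_def by (simp add: algebra_simps mv_neg)

lemma tendsto_hb: "(G \<longlongrightarrow> x) F \<Longrightarrow> (D \<longlongrightarrow> y) F \<Longrightarrow>
    ((\<lambda>k. hb A \<eta> \<mu> (G k) (D k)) \<longlongrightarrow> hb A \<eta> \<mu> x y) F"
  unfolding hb_def by (intro tendsto_intros)

lemma tendsto_phi: "(G \<longlongrightarrow> x) F \<Longrightarrow> ((\<lambda>k. phi A b w (G k)) \<longlongrightarrow> phi A b w x) F"
  unfolding phi_def l1_def by (intro tendsto_intros)

locale admm =
  fixes A :: "real^'p^'p" and b :: "real^'p" and \<eta> \<mu> c :: real and g :: "nat \<Rightarrow> 'p trip"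
  assumes mu: "\<mu> > 0"
    and pos: "\<And>x. \<mu> * ((A *v x) \<bullet> (A *v x)) \<le> (\<eta> - 1) * (x \<bullet> x)"
    and c0: "c \<ge> 0"
    and steps: "\<And>t. step A b \<eta> \<mu> c (g t) (g (Suc t))"
begin

abbreviation H where "H v \<equiv> hb A \<eta> \<mu> v v"

lemma eta: "\<eta> > 0"
proof -
  obtain i :: 'p where True by blast
  have "\<mu> * ((A *v axis i 1) \<bullet> (A *v axis i 1)) \<le> (\<eta> - 1) * (axis i (1::real) \<bullet> axis i 1)" by (rule pos)
  moreover have "\<mu> * ((A *v axis i 1) \<bullet> (A *v axis i 1)) \<ge> 0" using mu by simp
  moreover have "axis i (1::real) \<bullet> axis i 1 = 1" by (simp add: inner_axis_axis)
  ultimately show ?thesis by simp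
qed

lemma H_nonneg: "H v \<ge> 0"
  using hb_pos[OF mu pos, of v] by (cases "v = 0") auto

lemma zZ: "fst (snd (g (Suc t))) \<in> Z0 c"
  using steps[of t] c0 unfolding step_def by (simp add: clip_Z0)

lemma vi_t: "fst (snd wh) \<in> Z0 c \<Longrightarrow> hb A \<eta> \<mu> (g (Suc t) - wh) (g (Suc t) - g t) \<le> phi A b wh (g (Suc t))"
  by (rule vi[OF eta mu steps])

lemma fejer:
  assumes "sad A b c ws"
  shows "H (g (Suc t) - ws) + H (g (Suc t) - g t) \<le> H (g t - ws)"
proof -
  have zs: "fst (snd ws) \<in> Z0 c" using assms by (simp add: sad_def)
  have "hb A \<eta> \<mu> (g (Suc t) - ws) (g (Suc t) - g t) \<le> 0"
    using vi_t[OF zs, of t] sad_phi[OF assms zZ[of t]] by linarith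
  moreover have "g t - ws = (g (Suc t) - ws) - (g (Suc t) - g t)" by simp
  ultimately show ?thesis using hb_expand[of A \<eta> \<mu> "g (Suc t) - ws" "g (Suc t) - g t"] by simp
qed

lemma dmono: "H (g (Suc (Suc t)) - g (Suc t)) \<le> H (g (Suc t) - g t)"
proof -
  define D where "D = g (Suc (Suc t)) - g (Suc t)"
  define d where "d = g (Suc t) - g t"
  have a: "hb A \<eta> \<mu> D D \<le> phi A b (g (Suc t)) (g (Suc (Suc t)))"
    using vi_t[OF zZ[of t], of "Suc t"] unfolding D_def by simp
  have b: "hb A \<eta> \<mu> (g (Suc t) - g (Suc (Suc t))) d \<le> phi A b (g (Suc (Suc t))) (g (Suc t))"
    using vi_t[OF zZ[of "Suc t"], of t] unfolding d_def by simp
  have "g (Suc t) - g (Suc (Suc t)) = - D" unfolding D_def by simp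
  then have "hb A \<eta> \<mu> (g (Suc t) - g (Suc (Suc t))) d = - hb A \<eta> \<mu> D d"
    by (simp add: hb_minus_left)
  then have "hb A \<eta> \<mu> D D \<le> hb A \<eta> \<mu> D d"
    using a b phi_skew[of A b "g (Suc t)" "g (Suc (Suc t))"] by linarith
  moreover have "H (d - D) \<ge> 0" by (rule H_nonneg)
  ultimately have "H D \<le> H d"
    using hb_expand[of A \<eta> \<mu> d D] hb_sym[of A \<eta> \<mu> d D] by linarith
  then show ?thesis unfolding D_def d_def .
qed

lemma sum_bound:
  assumes "sad A b c ws"
  shows "(\<Sum>s<n. H (g (Suc s) - g s)) + H (g n - ws) \<le> H (g 0 - ws)"
proof (induction n)
  case 0 then show ?case by simp
next
  case (Suc n)
  then show ?case using fejer[OF assms, of n] by simp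
qed

lemma fejer_mono:
  assumes "sad A b c ws"
  shows "H (g n - ws) \<le> H (g 0 - ws)"
proof -
  have "(\<Sum>s<n. H (g (Suc s) - g s)) \<ge> 0" by (intro sum_nonneg H_nonneg)
  then show ?thesis using sum_bound[OF assms, of n] by linarith
qed

lemma d_dec: "s \<le> T \<Longrightarrow> H (g (Suc T) - g T) \<le> H (g (Suc s) - g s)"
proof (induction T rule: dec_induct)
  case base then show ?case by simp
next
  case (step n) then show ?case using dmono[of n] by linarith
qed

lemma rate:
  assumes "sad A b c ws"
  shows "H (g (Suc T) - g T) \<le> H (g 0 - ws) / real (T + 1)"
proof -
  have "real (T + 1) * H (g (Suc T) - g T) = (\<Sum>s<T+1. H (g (Suc T) - g T))" by simp
  also have "\<dots> \<le> (\<Sum>s<T+1. H (g (Suc s) - g s))" by (intro sum_mono d_dec) simp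
  also have "\<dots> \<le> H (g 0 - ws)" using sum_bound[OF assms, of "T+1"] H_nonneg[of "g (T+1) - ws"] by linarith
  finally show ?thesis by (simp add: field_simps)
qed

end



context admm
begin

lemma sad_of_phi:
  assumes zl: "fst (snd l) \<in> Z0 c"
    and ph: "\<And>wh. fst (snd wh) \<in> Z0 c \<Longrightarrow> phi A b wh l \<ge> 0"
  shows "sad A b c l"
proof -
  obtain bl zl ul where l: "l = (bl, zl, ul)" by (cases l) auto
  define rl where "rl = A *v bl - zl - b"
  have "phi A b (bl, zl, ul - rl) l \<ge> 0" using ph[of "(bl, zl, ul - rl)"] zl l by simp
  moreover have "phi A b (bl, zl, ul - rl) l = - (rl \<bullet> rl)"
    unfolding phi_def l by (simp add: rl_def[symmetric])
  ultimately have "- (rl \<bullet> rl) \<ge> 0" by simp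
  then have r0: "rl = 0" by (metis inner_ge_zero inner_eq_zero_iff neg_0_le_iff_le order_antisym)
  have opt: "l1 bl \<le> l1 \<beta> - ul \<bullet> (A *v \<beta> - z - b)" if z: "z \<in> Z0 c" for \<beta> z
  proof -
    have "phi A b (\<beta>, z, ul) l \<ge> 0" using ph[of "(\<beta>, z, ul)"] z by simp
    moreover have "phi A b (\<beta>, z, ul) l = l1 \<beta> - l1 bl - ul \<bullet> (A *v \<beta> - z - b - rl)"
      unfolding phi_def l rl_def
      by (simp add: matrix_vector_mult_diff_distrib inner_diff_left inner_diff_right algebra_simps inner_commute)
    ultimately show ?thesis using r0 by simp
  qed
  show ?thesis unfolding sad_def l using zl l r0 opt unfolding rl_def by auto
qed

lemma converges:
  assumes ws: "sad A b c ws"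
  shows "\<exists>l. sad A b c l \<and> g \<longlonglongrightarrow> l"
proof -
  obtain m where m: "m > 0" "\<And>v::'p trip. m * (norm v)^2 \<le> H v"
    using hb_coercive[OF mu pos] by blast
  define C where "C = H (g 0 - ws)"
  have nle: "norm v \<le> sqrt (H v / m)" for v :: "'p trip"
    using m by (intro real_le_rsqrt) (simp add: field_simps mult.commute)
  have bd: "bounded (range g)"
  proof -
    have "norm (g t) \<le> norm ws + sqrt (C / m)" for t
    proof -
      have "norm (g t - ws) \<le> sqrt (H (g t - ws) / m)" by (rule nle)
      also have "\<dots> \<le> sqrt (C / m)" unfolding C_def using fejer_mono[OF ws, of t] m
        by (intro real_sqrt_le_mono divide_right_mono) auto
      finally show ?thesis by (metis add.commute norm_triangle_sub order_trans add_left_mono)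
    qed
    then show ?thesis unfolding bounded_iff by blast
  qed
  obtain l r where r: "strict_mono r" and lim_r: "(g \<circ> r) \<longlonglongrightarrow> l"
    using bounded_imp_convergent_subsequence[OF bd] by blast
  define d where "d t = g (Suc t) - g t" for t
  have d0: "d \<longlonglongrightarrow> 0"
  proof (rule Lim_null_comparison)
    show "\<forall>\<^sub>F t in sequentially. norm (d t) \<le> sqrt ((C / m) * inverse (real (Suc t)))"
    proof (rule always_eventually, rule allI)
      fix t
      have "norm (d t) \<le> sqrt (H (d t) / m)" by (rule nle)
      also have "H (d t) = H (g (Suc t) - g t)" unfolding d_def ..
      also have "sqrt (H (g (Suc t) - g t) / m) \<le> sqrt ((C / m) * inverse (real (Suc t)))"
      proof (rule real_sqrt_le_mono)
        have "H (g (Suc t) - g t) \<le> C / real (t + 1)" using rate[OF ws, of t] unfolding C_def .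
        then have "H (g (Suc t) - g t) / m \<le> (C / real (t + 1)) / m" using m by (intro divide_right_mono) auto
        also have "(C / real (t + 1)) / m = (C / m) * inverse (real (Suc t))" by (simp add: field_simps)
        finally show "H (g (Suc t) - g t) / m \<le> (C / m) * inverse (real (Suc t))" .
      qed
      finally show "norm (d t) \<le> sqrt ((C / m) * inverse (real (Suc t)))" .
    qed
    have "(\<lambda>t. (C / m) * inverse (real (Suc t))) \<longlonglongrightarrow> (C / m) * 0"
      by (intro tendsto_mult tendsto_const LIMSEQ_inverse_real_of_nat)
    then have "(\<lambda>t. sqrt ((C / m) * inverse (real (Suc t)))) \<longlonglongrightarrow> sqrt ((C / m) * 0)"
      by (rule tendsto_real_sqrt)
    then show "(\<lambda>t. sqrt ((C / m) * inverse (real (Suc t)))) \<longlonglongrightarrow> 0" by simp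
  qed
  have dr: "(\<lambda>k. d (r k)) \<longlonglongrightarrow> 0"
    using LIMSEQ_subseq_LIMSEQ[OF d0 r] by (simp add: o_def)
  have gr: "(\<lambda>k. g (r k)) \<longlonglongrightarrow> l" using lim_r by (simp add: o_def)
  have gr1: "(\<lambda>k. g (Suc (r k))) \<longlonglongrightarrow> l"
  proof -
    have "(\<lambda>k. g (r k) + d (r k)) \<longlonglongrightarrow> l + 0" by (intro tendsto_add gr dr)
    then show ?thesis by (simp add: d_def)
  qed
  have zl: "fst (snd l) \<in> Z0 c"
  proof -
    have "\<forall>k. fst (snd (g (Suc (r k)))) \<in> Z0 c" using zZ by blast
    moreover have "(\<lambda>k. fst (snd (g (Suc (r k))))) \<longlonglongrightarrow> fst (snd l)" by (intro tendsto_intros gr1)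
    ultimately show ?thesis using closed_sequentially[OF closed_Z0, where f="\<lambda>k. fst (snd (g (Suc (r k))))"] by blast
  qed
  have ph: "phi A b wh l \<ge> 0" if wz: "fst (snd wh) \<in> Z0 c" for wh
  proof (rule tendsto_le[OF trivial_limit_sequentially])
    show "(\<lambda>k. phi A b wh (g (Suc (r k)))) \<longlonglongrightarrow> phi A b wh l" by (rule tendsto_phi[OF gr1])
    have "(\<lambda>k. hb A \<eta> \<mu> (g (Suc (r k)) - wh) (d (r k))) \<longlonglongrightarrow> hb A \<eta> \<mu> (l - wh) 0"
      by (intro tendsto_hb tendsto_intros gr1 dr)
    then show "(\<lambda>k. hb A \<eta> \<mu> (g (Suc (r k)) - wh) (d (r k))) \<longlonglongrightarrow> 0" by simp
    show "\<forall>\<^sub>F k in sequentially. hb A \<eta> \<mu> (g (Suc (r k)) - wh) (d (r k)) \<le> phi A b wh (g (Suc (r k)))"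
      using vi_t[OF wz] unfolding d_def by simp
  qed
  have sl: "sad A b c l" by (rule sad_of_phi[OF zl ph])
  define V where "V t = H (g t - l)" for t
  have Vdec: "V n \<le> V s" if "s \<le> n" for s n
    using that
  proof (induction n rule: dec_induct)
    case base then show ?case by simp
  next
    case (step n) then show ?case using fejer[OF sl, of n] H_nonneg[of "g (Suc n) - g n"] unfolding V_def by linarith
  qed
  have Vr: "(\<lambda>k. V (r k)) \<longlonglongrightarrow> 0"
  proof -
    have "(\<lambda>k. hb A \<eta> \<mu> (g (r k) - l) (g (r k) - l)) \<longlonglongrightarrow> hb A \<eta> \<mu> (l - l) (l - l)"
      by (intro tendsto_hb tendsto_intros gr)
    then show ?thesis unfolding V_def by simp
  qed
  have V0: "V \<longlonglongrightarrow> 0"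
  proof (rule LIMSEQ_I)
    fix e :: real assume e: "e > 0"
    obtain K where K: "\<And>k. k \<ge> K \<Longrightarrow> norm (V (r k) - 0) < e" using LIMSEQ_D[OF Vr e] by blast
    have "norm (V n - 0) < e" if "n \<ge> r K" for n
    proof -
      have "V n \<le> V (r K)" using Vdec that by blast
      moreover have "V (r K) < e" using K[of K] H_nonneg[of "g (r K) - l"] unfolding V_def by simp
      moreover have "V n \<ge> 0" unfolding V_def by (rule H_nonneg)
      ultimately show ?thesis by simp
    qed
    then show "\<exists>no. \<forall>n\<ge>no. norm (V n - 0) < e" by blast
  qed
  have "(\<lambda>t. g t - l) \<longlonglongrightarrow> 0"
  proof (rule Lim_null_comparison)
    show "\<forall>\<^sub>F t in sequentially. norm (g t - l) \<le> sqrt (V t / m)"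
      unfolding V_def using nle by (intro always_eventually allI) blast
    have "(\<lambda>t. V t / m) \<longlonglongrightarrow> 0 / m" by (intro tendsto_divide V0 tendsto_const) (use m in simp)
    then have "(\<lambda>t. sqrt (V t / m)) \<longlonglongrightarrow> sqrt (0 / m)" by (rule tendsto_real_sqrt)
    then show "(\<lambda>t. sqrt (V t / m)) \<longlonglongrightarrow> 0" by simp
  qed
  then have "g \<longlonglongrightarrow> l" by (simp add: LIM_zero_iff)
  then show ?thesis using sl by blast
qed

end



lemma Hnorm2_hb: "Hnorm2 X \<mu> g = hb (transpose X ** X) (eta_of X \<mu>) \<mu> g g"
proof -
  obtain \<beta> z u where g: "g = (\<beta>, z, u)" by (cases g) auto
  define A where "A = transpose X ** X"
  define \<eta> where "\<eta> = eta_of X \<mu>"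
  have H11: "\<mu> *\<^sub>R (transpose A ** A) + (\<eta> *\<^sub>R mat 1 - \<mu> *\<^sub>R (transpose A ** A)) = \<eta> *\<^sub>R (mat 1 :: real^'a^'a)"
    by simp
  show ?thesis
    unfolding Hnorm2_def Let_def g A_def[symmetric] \<eta>_def[symmetric] hb_def
    by (simp only: H11 scaleR_matrix_vector_assoc[symmetric] matrix_vector_mul_lid fst_conv snd_conv prod.case)
      (simp add: adj adj2 inner_commute algebra_simps)
qed

lemma lagr_eq: "lagr X y lam \<beta> z u =
   (if z \<in> Z0 (real CARD('n) * lam) then ereal (l1 \<beta> - u \<bullet> ((transpose X ** X) *v \<beta> - z - transpose X *v y)) else \<infinity>)"
  for X :: "real^'p^'n"
  unfolding lagr_def l1_def by simp

lemma saddle_sad: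
  fixes X :: "real^'p^'n"
  assumes lam: "lam \<ge> 0"
  shows "ws \<in> saddle_set X y lam \<longleftrightarrow> sad (transpose X ** X) (transpose X *v y) (real CARD('n) * lam) ws"
proof -
  define A where "A = transpose X ** X"
  define b where "b = transpose X *v y"
  define c where "c = real CARD('n) * lam"
  have c0: "c \<ge> 0" unfolding c_def using lam by simp
  obtain bs zs us where ws: "ws = (bs, zs, us)" by (cases ws) auto
  have L: "lagr X y lam \<beta> z u = (if z \<in> Z0 c then ereal (l1 \<beta> - u \<bullet> (A *v \<beta> - z - b)) else \<infinity>)" for \<beta> z u
    unfolding lagr_eq A_def b_def c_def ..
  show ?thesis
    unfolding A_def[symmetric] b_def[symmetric] c_def[symmetric]
  proof
    assume "ws \<in> saddle_set X y lam"
    then have S: "\<And>\<beta> z u. lagr X y lam bs zs u \<le> lagr X y lam bs zs us \<and> lagr X y lam bs zs us \<le> lagr X y lam \<beta> z us"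
      unfolding saddle_set_def ws by auto
    have zs: "zs \<in> Z0 c"
    proof (rule ccontr)
      assume "zs \<notin> Z0 c"
      then have "lagr X y lam bs zs us = \<infinity>" unfolding L by simp
      moreover have "lagr X y lam bs zs us \<le> lagr X y lam bs 0 us" using S by blast
      moreover have "lagr X y lam bs 0 us \<noteq> \<infinity>" unfolding L using zero_Z0[OF c0] by simp
      ultimately show False by simp
    qed
    define r where "r = A *v bs - zs - b"
    have "lagr X y lam bs zs (us - r) \<le> lagr X y lam bs zs us" using S by blast
    then have "l1 bs - (us - r) \<bullet> r \<le> l1 bs - us \<bullet> r" unfolding L using zs r_def by simp
    then have "r \<bullet> r \<le> 0" by (simp add: inner_diff_left)
    then have r0: "r = 0" by (metis antisym inner_ge_zero inner_eq_zero_iff)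
    have opt: "l1 bs \<le> l1 \<beta> - us \<bullet> (A *v \<beta> - z - b)" if "z \<in> Z0 c" for \<beta> z
    proof -
      have "lagr X y lam bs zs us \<le> lagr X y lam \<beta> z us" using S by blast
      then show ?thesis unfolding L using zs that r0 r_def by simp
    qed
    show "sad A b c ws" unfolding sad_def ws using zs r0 opt r_def by simp
  next
    assume sd: "sad A b c ws"
    then have zs: "zs \<in> Z0 c" and r0: "A *v bs - zs - b = 0"
      and opt: "\<And>\<beta> z. z \<in> Z0 c \<Longrightarrow> l1 bs \<le> l1 \<beta> - us \<bullet> (A *v \<beta> - z - b)"
      unfolding sad_def ws by auto
    have "lagr X y lam bs zs u \<le> lagr X y lam bs zs us \<and> lagr X y lam bs zs us \<le> lagr X y lam \<beta> z us" for \<beta> z u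
      unfolding L using zs r0 opt by simp
    then show "ws \<in> saddle_set X y lam" unfolding saddle_set_def ws by auto
  qed
qed

lemma alg1_step_eq:
  "alg1_step X y lam \<mu> g g' = step (transpose X ** X) (transpose X *v y) (eta_of X \<mu>) \<mu> (real CARD('n) * lam) g g'"
  for X :: "real^'p^'n"
proof -
  obtain \<beta> z u where g: "g = (\<beta>, z, u)" by (cases g) auto
  obtain \<beta>' z' u' where g': "g' = (\<beta>', z', u')" by (cases g') auto
  show ?thesis unfolding alg1_step_def step_def g g' Let_def by simp
qed

lemma blk_sum:
  fixes K :: nat
  assumes I_disj: "\<forall>i\<in>{1..K}. \<forall>j\<in>{1..K}. i \<noteq> j \<longrightarrow> I i \<inter> I j = {}"
    and I_cover: "(\<Union>i\<in>{1..K}. I i) = UNIV"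
  shows "(\<Sum>i\<in>{1..K}. blk (I i) v) = v"
proof (subst vec_eq_iff, rule allI)
  fix j
  obtain i0 where i0: "i0 \<in> {1..K}" "j \<in> I i0" using I_cover by blast
  have "(\<Sum>i\<in>{1..K}. blk (I i) v) $ j = (\<Sum>i\<in>{1..K}. if j \<in> I i then v $ j else 0)"
    by (simp add: blk_def)
  also have "\<dots> = (\<Sum>i\<in>{1..K}. if i = i0 then v $ j else 0)"
  proof (rule sum.cong)
    fix i assume i: "i \<in> {1..K}"
    show "(if j \<in> I i then v $ j else 0) = (if i = i0 then v $ j else 0)"
    proof (cases "i = i0")
      case True then show ?thesis using i0 by simp
    next
      case False
      then have "I i \<inter> I i0 = {}" using I_disj i i0(1) by blast
      then have "j \<notin> I i" using i0(2) by blast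
      then show ?thesis using False by simp
    qed
  qed simp
  also have "\<dots> = v $ j" using i0 by (subst sum.delta) auto
  finally show "(\<Sum>i\<in>{1..K}. blk (I i) v) $ j = v $ j" .
qed

lemma mv_sum: "(\<Sum>i\<in>S. (A::real^'p^'m) *v f i) = A *v (\<Sum>i\<in>S. f i)"
proof (induction S rule: infinite_finite_induct)
  case (insert x F) then show ?case by (simp add: matrix_vector_right_distrib)
qed simp_all

lemma alg2_step_imp:
  fixes X :: "real^'p^'n"
  assumes I_disj: "\<forall>i\<in>{1..K}. \<forall>j\<in>{1..K}. i \<noteq> j \<longrightarrow> I i \<inter> I j = {}"
    and I_cover: "(\<Union>i\<in>{1..K}. I i) = UNIV"
    and st: "alg2_step X y lam \<mu> K I g g'"
  shows "step (transpose X ** X) (transpose X *v y) (eta_of X \<mu>) \<mu> (real CARD('n) * lam) g g'"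
proof -
  obtain \<beta> z u where g: "g = (\<beta>, z, u)" by (cases g) auto
  obtain \<beta>' z' u' where g': "g' = (\<beta>', z', u')" by (cases g') auto
  define A where "A = transpose X ** X"
  define \<tau> where "\<tau> = 1 / eta_of X \<mu>"
  have S: "\<And>v. (\<Sum>i\<in>{1..K}. A *v blk (I i) v) = A *v v"
    by (simp only: mv_sum blk_sum[OF I_disj I_cover])
  have B: "\<forall>i\<in>{1..K}. blk (I i) \<beta>' = blk (I i) (soft_thr \<tau> (blk (I i) \<beta> + \<tau> *\<^sub>R blk (I i) (transpose A *v u)))"
    and Z: "z' = clip (real CARD('n) * lam) (z - (1 / \<mu>) *\<^sub>R u)"
    and U: "u' = u - (\<mu> / 2) *\<^sub>R (2 *\<^sub>R ((\<Sum>i\<in>{1..K}. A *v blk (I i) \<beta>') - z' - transpose X *v y)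
              - ((\<Sum>i\<in>{1..K}. A *v blk (I i) \<beta>) - z - transpose X *v y))"
    using st unfolding alg2_step_def g g' Let_def A_def[symmetric] \<tau>_def[symmetric] by auto
  have Bv: "\<beta>' = soft_thr \<tau> (\<beta> + \<tau> *\<^sub>R (transpose A *v u))"
  proof (subst vec_eq_iff, rule allI)
    fix j
    obtain i where i: "i \<in> {1..K}" "j \<in> I i" using I_cover by blast
    have "blk (I i) \<beta>' $ j = blk (I i) (soft_thr \<tau> (blk (I i) \<beta> + \<tau> *\<^sub>R blk (I i) (transpose A *v u))) $ j"
      using B i by simp
    then show "\<beta>' $ j = soft_thr \<tau> (\<beta> + \<tau> *\<^sub>R (transpose A *v u)) $ j"
      using i by (simp add: blk_def soft_thr_def)
  qed
  show ?thesis unfolding step_def g g' A_def[symmetric] \<tau>_def[symmetric]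
    using Bv Z U S by simp
qed



theorem theorem2:
  fixes X :: "real^'p^'n" and y :: "real^'n" and lam \<mu> :: real
    and K :: nat and I :: "nat \<Rightarrow> 'p set"
    and g :: "nat \<Rightarrow> (real^'p) \<times> (real^'p) \<times> (real^'p)"
  assumes lam: "lam \<ge> 0" and mu: "\<mu> > 0"
    and K: "K \<ge> 1"
    and I_ne: "\<forall>i\<in>{1..K}. I i \<noteq> {}"
    and I_disj: "\<forall>i\<in>{1..K}. \<forall>j\<in>{1..K}. i \<noteq> j \<longrightarrow> I i \<inter> I j = {}"
    and I_cover: "(\<Union>i\<in>{1..K}. I i) = UNIV"
    and alg: "(\<forall>t. alg1_step X y lam \<mu> (g t) (g (Suc t)))
              \<or> (\<forall>t. alg2_step X y lam \<mu> K I (g t) (g (Suc t)))"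
    and nonempty: "saddle_set X y lam \<noteq> {}"
  shows "\<exists>gs \<in> saddle_set X y lam.
           g \<longlonglongrightarrow> gs \<and>
           (\<forall>T::nat. T > 0 \<longrightarrow>
              Hnorm2 X \<mu> (g T - g (Suc T)) \<le> Hnorm2 X \<mu> (g 0 - gs) / real (T + 1))"
proof -
  define A where "A = transpose X ** X"
  define b where "b = transpose X *v y"
  define \<eta> where "\<eta> = eta_of X \<mu>"
  define c where "c = real CARD('n) * lam"
  have c0: "c \<ge> 0" unfolding c_def using lam by simp
  have steps: "step A b \<eta> \<mu> c (g t) (g (Suc t))" for t
    using alg
  proof
    assume "\<forall>t. alg1_step X y lam \<mu> (g t) (g (Suc t))"
    then show ?thesis unfolding A_def b_def \<eta>_def c_def alg1_step_eq by blast
  next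
    assume "\<forall>t. alg2_step X y lam \<mu> K I (g t) (g (Suc t))"
    then show ?thesis unfolding A_def b_def \<eta>_def c_def using alg2_step_imp[OF I_disj I_cover] by blast
  qed
  have pos: "\<mu> * ((A *v x) \<bullet> (A *v x)) \<le> (\<eta> - 1) * (x \<bullet> x)" for x
    unfolding \<eta>_def eta_of_def A_def using rayleigh(2)[of \<mu> "transpose X ** X" x] mu by simp
  interpret admm A b \<eta> \<mu> c g
    using mu pos c0 steps by unfold_locales auto
  obtain ws where "ws \<in> saddle_set X y lam" using nonempty by blast
  then have ws: "sad A b c ws" using saddle_sad[OF lam] unfolding A_def b_def c_def by blast
  obtain l where sl: "sad A b c l" and lim: "g \<longlonglongrightarrow> l" using converges[OF ws] by blast
  have lS: "l \<in> saddle_set X y lam" using saddle_sad[OF lam] sl unfolding A_def b_def c_def by blast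
  have "Hnorm2 X \<mu> (g T - g (Suc T)) \<le> Hnorm2 X \<mu> (g 0 - l) / real (T + 1)" for T
  proof -
    have "Hnorm2 X \<mu> (g T - g (Suc T)) = hb A \<eta> \<mu> (g (Suc T) - g T) (g (Suc T) - g T)"
      unfolding Hnorm2_hb A_def[symmetric] \<eta>_def[symmetric] by (rule hb_swap)
    also have "\<dots> \<le> hb A \<eta> \<mu> (g 0 - l) (g 0 - l) / real (T + 1)" by (rule rate[OF sl])
    also have "\<dots> = Hnorm2 X \<mu> (g 0 - l) / real (T + 1)"
      unfolding Hnorm2_hb A_def[symmetric] \<eta>_def[symmetric] ..
    finally show ?thesis .
  qed
  then show ?thesis using lS lim by blast
qed

end
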